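(* For any $a,b>0$, the restriction of $J$ to $\mathcal P_{(a,b)}$ is coercive, i.e. $J(u,v)\to+\infty$ whenever $(u,v)\in\mathcal P_{(a,b)}$ and $\|(u,v)\|_{\mathbb D}\to\infty$.
   Context: Standing assumptions: $s\in(\tfrac12,1)$, $\mu_1,\mu_2,\beta>0$, $r_1,r_2>1$, $\frac{2(1+3s)}{1+s}<p,q,r_1+r_2<2_s=\frac{2(1+s)}{1-s}$. $\mathcal H^{1,s}(\mathbb R^2)$: $u\in L^2(\mathbb R^2)$ with $\partial_xu,(-\Delta)_y^{s/2}u\in L^2$ ($(-\Delta)_y^{s/2}$ the fractional Laplacian in $y$ only), norm $\|u\|^2=\|u\|_2^2+\|\partial_xu\|_2^2+\|(-\Delta)_y^{s/2}u\|_2^2$; $\mathbb D=\mathcal H^{1,s}\times\mathcal H^{1,s}$ with $\|(u,v)\|_{\mathbb D}^2=\|u\|^2+\|v\|^2$; $K(u)=\int(|\partial_xu|^2+|(-\Delta)_y^{s/2}u|^2)$. $J(u,v)=\tfrac12K(u)+\tfrac12K(v)-\frac{\mu_1}{p}\|u\|_p^p-\frac{\mu_2}{q}\|v\|_q^q-\beta\int|u|^{r_1}|v|^{r_2}$; $P(u,v)=sK(u)+sK(v)-\frac{(1+s)(p-2)}{2p}\mu_1\|u\|_p^p-\frac{(1+s)(q-2)}{2q}\mu_2\|v\|_q^q-\frac{(1+s)(r_1+r_2-2)}{2}\beta\int|u|^{r_1}|v|^{r_2}$; $\mathcal P=\{(u,v)\ne(0,0):P(u,v)=0\}$; $D_a=\{u:\|u\|_2^2\le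 a\}$; $\mathcal P_{(a,b)}=\mathcal P\cap(D_a\times D_b)$. *)

theory Defs
  imports "HOL-Analysis.Analysis"
begin

type_synonym fn2 = "real \<times> real \<Rightarrow> real"

definition test_fun :: "fn2 \<Rightarrow> bool" where
  "test_fun \<phi> \<longleftrightarrow> (\<exists>D. (\<forall>z. (\<phi> has_derivative D z) (at z))
      \<and> continuous_on UNIV (\<lambda>z. D z (1,0)) \<and> continuous_on UNIV (\<lambda>z. D z (0,1)))
    \<and> bounded {z. \<phi> z \<noteq> 0}"

definition pdx :: "fn2 \<Rightarrow> fn2" where
  "pdx \<phi> z = deriv (\<lambda>t. \<phi> (t, snd z)) (fst z)"

definition weak_dx :: "fn2 \<Rightarrow> fn2 \<Rightarrow> bool" where
  "weak_dx u g \<longleftrightarrow> (\<forall>\<phi>. test_fun \<phi> \<longrightarrow>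
     lebesgue_integral lborel (\<lambda>z. u z * pdx \<phi> z) = - lebesgue_integral lborel (\<lambda>z. g z * \<phi> z))"

definition dx :: "fn2 \<Rightarrow> fn2" where
  "dx u = (SOME g. g \<in> borel_measurable lborel \<and> integrable lborel (\<lambda>z. (g z)\<^sup>2) \<and> weak_dx u g)"

text \<open>Normalising constant C(1,s) of the one-dimensional fractional Laplacian
  (Di Nezza--Palatucci--Valdinoci): C(1,s) = (\<integral>_R (1 - cos t)/|t|^(1+2s) dt)^(-1).\<close>
definition frac_const :: "real \<Rightarrow> real" where
  "frac_const s = 1 / (lebesgue_integral lborel (\<lambda>t. (1 - cos t) / abs t powr (1 + 2 * s)))"

definition gagliardo_y :: "real \<Rightarrow> fn2 \<Rightarrow> ennreal" where
  "gagliardo_y s u = nn_integral lborel (\<lambda>x. nn_integral lborel (\<lambda>y. nn_integral lborel (\<lambda>y'.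
       ennreal ((u (x,y) - u (x,y'))\<^sup>2 / abs (y - y') powr (1 + 2 * s)))))"

text \<open>\<parallel>(-\<Delta>)_y^(s/2) u\<parallel>_2^2 = C(1,s)/2 * [u]^2 (Fourier/singular-integral equivalence, per x-slice).\<close>
definition fraclap_sq :: "real \<Rightarrow> fn2 \<Rightarrow> real" where
  "fraclap_sq s u = frac_const s / 2 * enn2real (gagliardo_y s u)"

definition L2sq :: "fn2 \<Rightarrow> real" where
  "L2sq u = lebesgue_integral lborel (\<lambda>z. (u z)\<^sup>2)"

definition Lp_pow :: "real \<Rightarrow> fn2 \<Rightarrow> real" where
  "Lp_pow p u = lebesgue_integral lborel (\<lambda>z. \<bar>u z\<bar> powr p)"

definition H1s :: "real \<Rightarrow> fn2 set" where
  "H1s s = {u. u \<in> borel_measurable lborel \<and> integrable lborel (\<lambda>z. (u z)\<^sup>2)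
      \<and> (\<exists>g. g \<in> borel_measurable lborel \<and> integrable lborel (\<lambda>z. (g z)\<^sup>2) \<and> weak_dx u g)
      \<and> gagliardo_y s u < \<infinity>}"

definition Kf :: "real \<Rightarrow> fn2 \<Rightarrow> real" where
  "Kf s u = L2sq (dx u) + fraclap_sq s u"

definition Hnorm :: "real \<Rightarrow> fn2 \<Rightarrow> real" where
  "Hnorm s u = sqrt (L2sq u + Kf s u)"

definition Dnorm :: "real \<Rightarrow> fn2 \<times> fn2 \<Rightarrow> real" where
  "Dnorm s w = sqrt ((Hnorm s (fst w))\<^sup>2 + (Hnorm s (snd w))\<^sup>2)"

definition coupling :: "real \<Rightarrow> real \<Rightarrow> fn2 \<Rightarrow> fn2 \<Rightarrow> real" where
  "coupling r1 r2 u v = lebesgue_integral lborel (\<lambda>z. \<bar>u z\<bar> powr r1 * \<bar>v z\<bar> powr r2)"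

definition Jf :: "real \<Rightarrow> real \<Rightarrow> real \<Rightarrow> real \<Rightarrow> real \<Rightarrow> real \<Rightarrow> real \<Rightarrow> real \<Rightarrow> 
    fn2 \<times> fn2 \<Rightarrow> real" where
  "Jf s \<mu>1 \<mu>2 \<beta> p q r1 r2 w =
     Kf s (fst w) / 2 + Kf s (snd w) / 2 - \<mu>1 / p * Lp_pow p (fst w) - \<mu>2 / q * Lp_pow q (snd w)
     - \<beta> * coupling r1 r2 (fst w) (snd w)"

definition Pf :: "real \<Rightarrow> real \<Rightarrow> real \<Rightarrow> real \<Rightarrow> real \<Rightarrow> real \<Rightarrow> real \<Rightarrow> real \<Rightarrow> 
    fn2 \<times> fn2 \<Rightarrow> real" where
  "Pf s \<mu>1 \<mu>2 \<beta> p q r1 r2 w =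
     s * Kf s (fst w) + s * Kf s (snd w)
     - (1 + s) * (p - 2) / (2 * p) * \<mu>1 * Lp_pow p (fst w)
     - (1 + s) * (q - 2) / (2 * q) * \<mu>2 * Lp_pow q (snd w)
     - (1 + s) * (r1 + r2 - 2) / 2 * \<beta> * coupling r1 r2 (fst w) (snd w)"

definition Pab :: "real \<Rightarrow> real \<Rightarrow> real \<Rightarrow> real \<Rightarrow> real \<Rightarrow> real \<Rightarrow> real \<Rightarrow> real \<Rightarrow> real
    \<Rightarrow> real \<Rightarrow> (fn2 \<times> fn2) set" where
  "Pab s \<mu>1 \<mu>2 \<beta> p q r1 r2 a b =
     {w. fst w \<in> H1s s \<and> snd w \<in> H1s s
       \<and> \<not> ((AE z in lborel. fst w z = 0) \<and> (AE z in lborel. snd w z = 0))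
       \<and> Pf s \<mu>1 \<mu>2 \<beta> p q r1 r2 w = 0
       \<and> L2sq (fst w) \<le> a \<and> L2sq (snd w) \<le> b}"

end

theory Submission
  imports Defs
begin

lemma Lp_nonneg: "Lp_pow p u \<ge> 0"
  unfolding Lp_pow_def by (rule integral_nonneg_AE) auto

lemma coup_nonneg: "coupling r1 r2 u v \<ge> 0"
  unfolding coupling_def by (rule integral_nonneg_AE) auto

lemma L2_nonneg: "L2sq u \<ge> 0"
  unfolding L2sq_def by (rule integral_nonneg_AE) auto

lemma frac_nonneg: "frac_const s \<ge> 0"
proof -
  have "0 \<le> lebesgue_integral lborel (\<lambda>t::real. (1 - cos t) / abs t powr (1 + 2 * s))"
    by (rule integral_nonneg_AE) auto
  thus ?thesis unfolding frac_const_def by simp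
qed

lemma K_nonneg: "Kf s u \<ge> 0"
  unfolding Kf_def fraclap_sq_def using L2_nonneg[of "dx u"] frac_nonneg[of s]
  by (simp add: enn2real_nonneg)

lemma Dnorm_sq: "(Dnorm s w)\<^sup>2 = L2sq (fst w) + Kf s (fst w) + L2sq (snd w) + Kf s (snd w)"
  unfolding Dnorm_def Hnorm_def
  using L2_nonneg[of "fst w"] L2_nonneg[of "snd w"] K_nonneg[of s "fst w"] K_nonneg[of s "snd w"]
  by simp

theorem corollary3p6:
  fixes s \<mu>1 \<mu>2 \<beta> p q r1 r2 a b :: real
    and U :: "nat \<Rightarrow> fn2 \<times> fn2"
  assumes "1/2 < s" "s < 1"
    and "\<mu>1 > 0" "\<mu>2 > 0" "\<beta> > 0" "r1 > 1" "r2 > 1"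
    and "2 * (1+3 * s)/(1+s) < p" "p < 2 * (1+s)/(1-s)"
    and "2 * (1+3 * s)/(1+s) < q" "q < 2 * (1+s)/(1-s)"
    and "2 * (1+3 * s)/(1+s) < r1 + r2" "r1 + r2 < 2 * (1+s)/(1-s)"
    and "a > 0" "b > 0"
    and "\<forall>n. U n \<in> Pab s \<mu>1 \<mu>2 \<beta> p q r1 r2 a b"
    and "filterlim (\<lambda>n. Dnorm s (U n)) at_top sequentially"
  shows "filterlim (\<lambda>n. Jf s \<mu>1 \<mu>2 \<beta> p q r1 r2 (U n)) at_top sequentially"
proof -
  define \<gamma> where "\<gamma> = min p (min q (r1 + r2))"
  have g: "2 * (1+3 * s)/(1+s) < \<gamma>" using assms(8,10,12) unfolding \<gamma>_def by auto
  have s1: "1 + s > 0" using assms(1) by simp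
  have g2: "(1+s) * (\<gamma> - 2) > 4 * s"
  proof -
    have "2 * (1+3 * s) < \<gamma> * (1+s)" using g s1 by (simp add: field_simps)
    thus ?thesis by (simp add: algebra_simps)
  qed
  have gpos: "\<gamma> - 2 > 0"
  proof (rule ccontr)
    assume "\<not> \<gamma> - 2 > 0"
    hence "(1+s) * (\<gamma> - 2) \<le> 0" using s1 by (simp add: mult_nonneg_nonpos)
    thus False using g2 assms(1) by simp
  qed
  define t where "t = 2 / ((1+s) * (\<gamma> - 2))"
  have tpos: "t > 0" unfolding t_def using s1 gpos by simp
  have tg: "t * ((1+s) * (\<gamma> - 2)) = 2" unfolding t_def using s1 gpos by simp
  define c where "c = 1/2 - t * s"
  have cpos: "c > 0"
  proof -
    have "t * (4 * s) < t * ((1+s) * (\<gamma> - 2))" using g2 tpos by simp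
    thus ?thesis unfolding c_def using tg by (simp add: algebra_simps)
  qed
  have coef: "t * (1+s) * (x - 2) \<ge> 2" if "x \<ge> \<gamma>" for x
  proof -
    have "t * ((1+s) * (\<gamma> - 2)) \<le> t * ((1+s) * (x - 2))"
      using that tpos s1 by (intro mult_left_mono) auto
    thus ?thesis using tg by (simp add: algebra_simps)
  qed
  have pp: "p > 2" "q > 2" "r1 + r2 > 2" using gpos unfolding \<gamma>_def by auto
  have key: "Jf s \<mu>1 \<mu>2 \<beta> p q r1 r2 w \<ge> c * (Kf s (fst w) + Kf s (snd w))"
    if w: "w \<in> Pab s \<mu>1 \<mu>2 \<beta> p q r1 r2 a b" for w
  proof -
    define A where "A = Lp_pow p (fst w)"
    define B where "B = Lp_pow q (snd w)"
    define C where "C = coupling r1 r2 (fst w) (snd w)"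
    define K1 where "K1 = Kf s (fst w)"
    define K2 where "K2 = Kf s (snd w)"
    have A0: "A \<ge> 0" "B \<ge> 0" "C \<ge> 0" unfolding A_def B_def C_def
      using Lp_nonneg coup_nonneg by auto
    have P0: "s*K1 + s*K2 - (1 + s) * (p - 2) / (2 * p) * \<mu>1 * A
       - (1 + s) * (q - 2) / (2 * q) * \<mu>2 * B - (1 + s) * (r1 + r2 - 2) / 2 * \<beta> * C = 0"
      using w unfolding Pab_def Pf_def A_def B_def C_def K1_def K2_def by simp
    have J: "Jf s \<mu>1 \<mu>2 \<beta> p q r1 r2 w = K1/2 + K2/2 - \<mu>1/p*A - \<mu>2/q*B - \<beta>*C"
      unfolding Jf_def A_def B_def C_def K1_def K2_def by simp
    have ca: "(t * (1+s) * (p-2) - 2) / (2*p) * \<mu>1 * A \<ge> 0"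
      using coef[of p] A0 assms(3) pp unfolding \<gamma>_def by simp
    have cb: "(t * (1+s) * (q-2) - 2) / (2*q) * \<mu>2 * B \<ge> 0"
      using coef[of q] A0 assms(4) pp unfolding \<gamma>_def by simp
    have cc: "(t * (1+s) * (r1+r2-2) - 2) / 2 * \<beta> * C \<ge> 0"
      using coef[of "r1+r2"] A0 assms(5) unfolding \<gamma>_def by simp
    have eq: "K1/2 + K2/2 - \<mu>1/p*A - \<mu>2/q*B - \<beta>*C
      = c*(K1+K2) + (t * (1+s) * (p-2) - 2) / (2*p) * \<mu>1 * A
        + (t * (1+s) * (q-2) - 2) / (2*q) * \<mu>2 * B
        + (t * (1+s) * (r1+r2-2) - 2) / 2 * \<beta> * C
        + t * (s*K1 + s*K2 - (1 + s) * (p - 2) / (2 * p) * \<mu>1 * A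
       - (1 + s) * (q - 2) / (2 * q) * \<mu>2 * B - (1 + s) * (r1 + r2 - 2) / 2 * \<beta> * C)"
      unfolding c_def using pp by (simp add: field_simps)
    note eq2 = eq[unfolded P0 mult_zero_right add_0_right]
    show ?thesis using J eq2 ca cb cc unfolding K1_def K2_def by linarith
  qed
  have ev: "eventually (\<lambda>n. Dnorm s (U n) \<ge> 1) sequentially"
    using assms(17) by (simp add: filterlim_at_top)
  have lim1: "filterlim (\<lambda>n. c * ((- a - b) + Dnorm s (U n))) at_top sequentially"
    apply (rule filterlim_tendsto_pos_mult_at_top[OF tendsto_const cpos])
    apply (rule filterlim_tendsto_add_at_top[OF _ assms(17)])
    by (rule tendsto_const)
  show ?thesis
  proof (rule filterlim_at_top_mono[OF lim1])
    show "\<forall>\<^sub>F n in sequentially. c * ((- a - b) + Dnorm s (U n)) \<le> Jf s \<mu>1 \<mu>2 \<beta> p q r1 r2 (U n)"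
      using ev
    proof eventually_elim
      case (elim n)
      let ?w = "U n"
      have w: "?w \<in> Pab s \<mu>1 \<mu>2 \<beta> p q r1 r2 a b" using assms(16) by simp
      have la: "L2sq (fst ?w) \<le> a" "L2sq (snd ?w) \<le> b" using w unfolding Pab_def by auto
      have "Dnorm s ?w \<le> (Dnorm s ?w)\<^sup>2" using elim by (simp add: power2_eq_square)
      hence "Dnorm s ?w - a - b \<le> Kf s (fst ?w) + Kf s (snd ?w)" using Dnorm_sq[of s ?w] la by linarith
      hence "c * ((- a - b) + Dnorm s ?w) \<le> c * (Kf s (fst ?w) + Kf s (snd ?w))"
        using cpos by (intro mult_left_mono) auto
      thus ?case using key[OF w] by linarith
    qed
  qed
qed

end
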